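(* Let $H$ be an ASC-hypergraph, $Y\in H$, $Z=\bigcup H\setminus Y$, and let $K$ and $J$ be constructions of $H_Y$ and ${}_Z H$ respectively. Then the continuation $K\ast J=K\cup\{X\cup_H Y\mid X\in J\}$ is a construction of $H$.
   Context: A hypergraph is a finite set $H$ of nonempty subsets of some finite set; its carrier is $\bigcup H$. For a family $F$ and set $Y$, $F_Y=\{X\in F\mid X\subseteq Y\}$, and ${}_Z F=\{X\cap Z\mid X\in F,\ X\cap Z\neq\emptyset\}$. For $X\subseteq\bigcup H$, $X\cup_H Y=X\cup Y$ if $X\cup Y\in H$, and $X\cup_H Y=X$ otherwise. A hypergraph partition of $H$ is a partition $\{H_1,\dots,H_n\}$ ($n\ge0$) of the set $H$ with $\{\bigcup H_1,\dots,\bigcup H_n\}$ a partition of $\bigcup H$; $H$ is connected if it has exactly one hypergraph partition; the finest hypergraph partition is the unique one whose blocks are connected. $H$ is atomic if $\{x\}\in H$ for all $x\in\bigcup H$; saturated if $X_1,X_2\in H$ with $X_1\cap X_2\neq\emptyset$ imply $X_1\cup X_2\in H$. An ASC-hypergraph is one that is atomic, saturated and connected (for such $H$, $H_Y$ and ${}_Z H$ are ASC-hypergraphs). Constructions of an atomic $H$, by induction on $|\bigcup H|$: (0) $\emptyset$ is the only construction of $\emptyset$; (1) if $|\bigcup H|\ge1$, $H$ connected, $x\in\bigcup H$, $K$ a construction of $H_{\bigcup H\setminus\{x\}}$, then $K\cup\{\bigcup H\}$ is a construction of $H$; (2) if $H$ is not connected with finest hypergraph partition $\{H_1,\dots,H_n\}$,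 $n\ge2$, and $K_i$ is a construction of $H_i$, then $K_1\cup\dots\cup K_n$ is a construction of $H$. *)

theory Defs
  imports Main
begin

definition hypergraph :: "'a set set \<Rightarrow> bool" where
  "hypergraph H \<longleftrightarrow> finite H \<and> (\<forall>X\<in>H. X \<noteq> {} \<and> finite X)"

definition restr :: "'a set set \<Rightarrow> 'a set \<Rightarrow> 'a set set" where
  "restr F Y = {X \<in> F. X \<subseteq> Y}"

definition trace :: "'a set \<Rightarrow> 'a set set \<Rightarrow> 'a set set" where
  "trace Z F = {X \<inter> Z | X. X \<in> F \<and> X \<inter> Z \<noteq> {}}"

definition hunion :: "'a set set \<Rightarrow> 'a set \<Rightarrow> 'a set \<Rightarrow> 'a set" where
  "hunion H X Y = (if X \<union> Y \<in> H then X \<union> Y else X)"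

definition hyp_partition :: "'a set set \<Rightarrow> 'a set set set \<Rightarrow> bool" where
  "hyp_partition H P \<longleftrightarrow>
     (\<forall>B\<in>P. B \<noteq> {}) \<and> \<Union>P = H \<and>
     (\<forall>B1\<in>P. \<forall>B2\<in>P. B1 \<noteq> B2 \<longrightarrow> B1 \<inter> B2 = {}) \<and>
     (\<forall>B\<in>P. \<Union>B \<noteq> {}) \<and> (\<Union>B\<in>P. \<Union>B) = \<Union>H \<and>
     (\<forall>B1\<in>P. \<forall>B2\<in>P. B1 \<noteq> B2 \<longrightarrow> \<Union>B1 \<inter> \<Union>B2 = {})"

definition hconnected :: "'a set set \<Rightarrow> bool" where
  "hconnected H \<longleftrightarrow> (\<exists>!P. hyp_partition H P)"

definition finest_partition :: "'a set set \<Rightarrow> 'a set set set \<Rightarrow> bool" where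
  "finest_partition H P \<longleftrightarrow> hyp_partition H P \<and> (\<forall>B\<in>P. hconnected B)"

definition atomic :: "'a set set \<Rightarrow> bool" where
  "atomic H \<longleftrightarrow> (\<forall>x\<in>\<Union>H. {x} \<in> H)"

definition saturated :: "'a set set \<Rightarrow> bool" where
  "saturated H \<longleftrightarrow> (\<forall>X1\<in>H. \<forall>X2\<in>H. X1 \<inter> X2 \<noteq> {} \<longrightarrow> X1 \<union> X2 \<in> H)"

definition ASC :: "'a set set \<Rightarrow> bool" where
  "ASC H \<longleftrightarrow> hypergraph H \<and> atomic H \<and> saturated H \<and> hconnected H"

inductive construction :: "'a set set \<Rightarrow> 'a set set \<Rightarrow> bool" where
  empty: "construction {} {}"
| conn: "\<lbrakk> hypergraph H; atomic H; card (\<Union>H) \<ge> 1; hconnected H; x \<in> \<Union>H;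
           construction (restr H (\<Union>H - {x})) K \<rbrakk>
         \<Longrightarrow> construction H (K \<union> {\<Union>H})"
| disconn: "\<lbrakk> hypergraph H; atomic H; \<not> hconnected H; finest_partition H P; card P \<ge> 2;
              \<forall>B\<in>P. construction B (Kf B) \<rbrakk>
         \<Longrightarrow> construction H (\<Union>B\<in>P. Kf B)"

end

theory Submission
  imports Defs
begin

lemma hpD1: "hyp_partition G P \<Longrightarrow> \<forall>B\<in>P. B \<noteq> {}"
  unfolding hyp_partition_def by (elim conjE) assumption
lemma hpD2: "hyp_partition G P \<Longrightarrow> \<Union>P = G"
  unfolding hyp_partition_def by (elim conjE) assumption
lemma hpD3: "hyp_partition G P \<Longrightarrow> \<forall>B1\<in>P. \<forall>B2\<in>P. B1 \<noteq> B2 \<longrightarrow> B1 \<inter> B2 = {}"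
  unfolding hyp_partition_def by (elim conjE) assumption
lemma hpD4: "hyp_partition G P \<Longrightarrow> \<forall>B\<in>P. \<Union>B \<noteq> {}"
  unfolding hyp_partition_def by (elim conjE) assumption
lemma hpD5: "hyp_partition G P \<Longrightarrow> (\<Union>B\<in>P. \<Union>B) = \<Union>G"
  unfolding hyp_partition_def by (elim conjE) assumption
lemma hpD6: "hyp_partition G P \<Longrightarrow> \<forall>B1\<in>P. \<forall>B2\<in>P. B1 \<noteq> B2 \<longrightarrow> \<Union>B1 \<inter> \<Union>B2 = {}"
  unfolding hyp_partition_def by (elim conjE) assumption
lemma hpI:
  assumes "\<forall>B\<in>P. B \<noteq> {}" "\<Union>P = G" "\<forall>B1\<in>P. \<forall>B2\<in>P. B1 \<noteq> B2 \<longrightarrow> B1 \<inter> B2 = {}" "\<forall>B\<in>P. \<Union>B \<noteq> {}" "(\<Union>B\<in>P. \<Union>B) = \<Union>G" "\<forall>B1\<in>P. \<forall>B2\<in>P. B1 \<noteq> B2 \<longrightarrow> \<Union>B1 \<inter> \<Union>B2 = {}"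
  shows "hyp_partition G P"
  unfolding hyp_partition_def by (intro conjI) (rule assms)+

lemma fpD: "finest_partition G P \<Longrightarrow> hyp_partition G P"
  "finest_partition G P \<Longrightarrow> \<forall>B\<in>P. hconnected B"
  unfolding finest_partition_def by simp_all

lemma hyp_ne: "hypergraph G \<Longrightarrow> X \<in> G \<Longrightarrow> X \<noteq> {}"
  unfolding hypergraph_def by blast

lemma hp_intro:
  assumes "hypergraph G" "\<forall>B\<in>P. B \<noteq> {}" "\<Union>P = G"
    "\<forall>B1\<in>P. \<forall>B2\<in>P. B1 \<noteq> B2 \<longrightarrow> \<Union>B1 \<inter> \<Union>B2 = {}"
  shows "hyp_partition G P"
proof -
  have ne: "\<And>X. X \<in> G \<Longrightarrow> X \<noteq> {}" using hyp_ne[OF assms(1)] .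
  have d: "\<forall>B1\<in>P. \<forall>B2\<in>P. B1 \<noteq> B2 \<longrightarrow> B1 \<inter> B2 = {}"
  proof (intro ballI impI)
    fix B1 B2 assume b: "B1 \<in> P" "B2 \<in> P" "B1 \<noteq> B2"
    show "B1 \<inter> B2 = {}"
    proof (rule ccontr)
      assume "B1 \<inter> B2 \<noteq> {}"
      then obtain X where X: "X \<in> B1" "X \<in> B2" by blast
      then have "X \<in> G" using assms(3) b(1) by blast
      then have "X \<noteq> {}" using ne by blast
      moreover have "X \<subseteq> \<Union>B1 \<inter> \<Union>B2" using X by blast
      moreover have "\<Union>B1 \<inter> \<Union>B2 = {}" using assms(4) b by blast
      ultimately show False by blast
    qed
  qed
  have c: "\<forall>B\<in>P. \<Union>B \<noteq> {}"
  proof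
    fix B assume "B \<in> P"
    then obtain X where "X \<in> B" using assms(2) by blast
    moreover have "X \<in> G" using \<open>X \<in> B\<close> \<open>B \<in> P\<close> assms(3) by blast
    ultimately show "\<Union>B \<noteq> {}" using ne by blast
  qed
  have u: "(\<Union>B\<in>P. \<Union>B) = \<Union>G" using assms(3) by blast
  show ?thesis by (rule hpI[OF assms(2,3) d c u assms(4)])
qed

lemma single_part: "hypergraph G \<Longrightarrow> G \<noteq> {} \<Longrightarrow> hyp_partition G {G}"
  by (rule hp_intro) auto

lemma full_conn:
  assumes "hypergraph G" "\<Union>G \<in> G"
  shows "hconnected G"
proof -
  have "G \<noteq> {}" using assms by auto
  have "\<And>P. hyp_partition G P \<Longrightarrow> P = {G}"
  proof -
    fix P assume hp: "hyp_partition G P"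
    have UP: "\<Union>P = G" using hpD2[OF hp] .
    then obtain B0 where B0: "B0 \<in> P" "\<Union>G \<in> B0" using assms(2) by blast
    have "\<forall>B\<in>P. B = B0"
    proof
      fix B assume BP: "B \<in> P"
      show "B = B0"
      proof (rule ccontr)
        assume "B \<noteq> B0"
        then have "\<Union>B \<inter> \<Union>B0 = {}" using hpD6[OF hp] B0(1) BP by blast
        moreover have "\<Union>B \<subseteq> \<Union>G" using UP BP by blast
        moreover have "\<Union>G \<subseteq> \<Union>B0" using B0 by blast
        moreover have "\<Union>B \<noteq> {}" using hpD4[OF hp] BP by blast
        ultimately show False by blast
      qed
    qed
    then have "P = {B0}" using B0 by blast
    then show "P = {G}" using UP by auto
  qed
  then show ?thesis unfolding hconnected_def using single_part[OF assms(1) \<open>G \<noteq> {}\<close>] by blast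
qed

lemma conn_unique: "hconnected G \<Longrightarrow> hyp_partition G P \<Longrightarrow> hyp_partition G Q \<Longrightarrow> P = Q"
  unfolding hconnected_def by blast

lemma not_conn:
  assumes "hypergraph G" "hyp_partition G P" "card P \<ge> 2"
  shows "\<not> hconnected G"
proof
  assume c: "hconnected G"
  have "P \<noteq> {}" using assms by auto
  then have "G \<noteq> {}" using hpD2[OF assms(2)] hpD1[OF assms(2)] by blast
  then have "P = {G}" using conn_unique[OF c assms(2) single_part[OF assms(1)]] by blast
  then show False using assms(3) by simp
qed

lemma hyp_sub: "hypergraph G \<Longrightarrow> B \<subseteq> G \<Longrightarrow> hypergraph B"
  unfolding hypergraph_def by (auto intro: finite_subset)

lemma fp_sub:
  assumes "hypergraph G" "finest_partition G P" "finest_partition G P'" "B \<in> P"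
  shows "\<exists>B'\<in>P'. B \<subseteq> B'"
proof -
  have hpP: "hyp_partition G P" and hpP': "hyp_partition G P'"
    using assms fpD by auto
  have BG: "B \<subseteq> G" using hpD2[OF hpP] assms(4) by blast
  have Bne: "B \<noteq> {}" using hpD1[OF hpP] assms(4) by blast
  have hB: "hypergraph B" using hyp_sub[OF assms(1) BG] .
  have cB: "hconnected B" using fpD(2)[OF assms(2)] assms(4) by blast
  define Q where "Q = {B \<inter> B' | B'. B' \<in> P' \<and> B \<inter> B' \<noteq> {}}"
  have "hyp_partition B Q"
  proof (rule hp_intro[OF hB])
    show "\<forall>C\<in>Q. C \<noteq> {}" unfolding Q_def by blast
    have UP: "\<Union>P' = G" using hpD2[OF hpP'] .
    show "\<Union>Q = B"
    proof
      show "\<Union>Q \<subseteq> B" unfolding Q_def by blast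
      show "B \<subseteq> \<Union>Q"
      proof
        fix X assume "X \<in> B"
        then obtain C where "C \<in> P'" "X \<in> C" using BG UP by blast
        then have "B \<inter> C \<in> Q" using \<open>X \<in> B\<close> unfolding Q_def by blast
        then show "X \<in> \<Union>Q" using \<open>X \<in> B\<close> \<open>X \<in> C\<close> by blast
      qed
    qed
    show "\<forall>B1\<in>Q. \<forall>B2\<in>Q. B1 \<noteq> B2 \<longrightarrow> \<Union>B1 \<inter> \<Union>B2 = {}"
    proof (intro ballI impI)
      fix B1 B2 assume "B1 \<in> Q" "B2 \<in> Q" "B1 \<noteq> B2"
      then obtain C1 C2 where C: "C1 \<in> P'" "C2 \<in> P'" "B1 = B \<inter> C1" "B2 = B \<inter> C2" unfolding Q_def by blast
      then have "C1 \<noteq> C2" using \<open>B1 \<noteq> B2\<close> by blast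
      then have "\<Union>C1 \<inter> \<Union>C2 = {}" using hpD6[OF hpP'] C(1,2) by blast
      then show "\<Union>B1 \<inter> \<Union>B2 = {}" using C(3,4) by blast
    qed
  qed
  then have "Q = {B}" using conn_unique[OF cB _ single_part[OF hB Bne]] by blast
  then have "B \<in> Q" by blast
  then show ?thesis unfolding Q_def by blast
qed

lemma fp_unique:
  assumes "hypergraph G" "finest_partition G P" "finest_partition G P'"
  shows "P = P'"
proof -
  have *: "P \<subseteq> P'" if h: "finest_partition G P" "finest_partition G P'" for P P'
  proof
    fix B assume BP: "B \<in> P"
    obtain B' where B': "B' \<in> P'" "B \<subseteq> B'" using fp_sub[OF assms(1) h BP] by blast
    obtain B'' where B'': "B'' \<in> P" "B' \<subseteq> B''" using fp_sub[OF assms(1) h(2) h(1) B'(1)] by blast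
    have hp: "hyp_partition G P" using fpD(1)[OF h(1)] .
    have "B \<noteq> {}" using hpD1[OF hp] BP by blast
    have "B \<inter> B'' = B" using B'(2) B''(2) by blast
    then have "B = B''" using hpD3[OF hp] BP B''(1) \<open>B \<noteq> {}\<close> by metis
    then have "B = B'" using B'(2) B''(2) by blast
    then show "B \<in> P'" using B'(1) by simp
  qed
  show ?thesis using *[OF assms(2,3)] *[OF assms(3,2)] by blast
qed

lemma aux_ins: "\<forall>X\<in>K. X \<noteq> {} \<and> X \<subseteq> A \<Longrightarrow> A \<subseteq> B \<Longrightarrow> B \<noteq> {} \<Longrightarrow> \<forall>X\<in>K \<union> {B}. X \<noteq> {} \<and> X \<subseteq> B"
  by blast

lemma card_ne: "1 \<le> card A \<Longrightarrow> A \<noteq> {}" by auto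

lemma constr_props: "construction G K \<Longrightarrow> hypergraph G \<and> (\<forall>X\<in>K. X \<noteq> {} \<and> X \<subseteq> \<Union>G)"
proof (induction rule: construction.induct)
  case empty
  show ?case by (simp add: hypergraph_def)
next
  case (conn H x K)
  have "\<Union>H \<noteq> {}" using card_ne[OF conn(3)] .
  moreover have "\<Union>(restr H (\<Union>H - {x})) \<subseteq> \<Union>H" unfolding restr_def by blast
  moreover have "\<forall>X\<in>K. X \<noteq> {} \<and> X \<subseteq> \<Union>(restr H (\<Union>H - {x}))" using conn.IH by (rule conjunct2)
  ultimately have "\<forall>X\<in>K \<union> {\<Union>H}. X \<noteq> {} \<and> X \<subseteq> \<Union>H" using aux_ins by metis
  then show ?case using conn(1) by (rule conjI[rotated])
next
  case (disconn H P Kf)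
  have "\<Union>P = H" using hpD2[OF fpD(1)[OF disconn(4)]] .
  then have a: "\<forall>B\<in>P. \<Union>B \<subseteq> \<Union>H" by blast
  have b: "\<forall>B\<in>P. \<forall>X\<in>Kf B. X \<noteq> {} \<and> X \<subseteq> \<Union>B" using disconn(6) by blast
  have "\<forall>X\<in>(\<Union>B\<in>P. Kf B). X \<noteq> {} \<and> X \<subseteq> \<Union>H"
  proof
    fix X assume "X \<in> (\<Union>B\<in>P. Kf B)"
    then obtain B where B: "B \<in> P" "X \<in> Kf B" by blast
    then have "X \<noteq> {}" "X \<subseteq> \<Union>B" "\<Union>B \<subseteq> \<Union>H" using a b by auto
    then show "X \<noteq> {} \<and> X \<subseteq> \<Union>H" by (meson order_trans)
  qed
  then show ?case using disconn(1) by (rule conjI[rotated])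
qed

lemma constr_empty_aux: "construction G J \<Longrightarrow> G = {} \<Longrightarrow> J = {}"
proof (induction rule: construction.induct)
  case empty then show ?case by simp
next
  case (conn H x K) then show ?case by simp
next
  case (disconn H P Kf)
  have "P = {}" using hpD1[OF fpD(1)[OF disconn(4)]] hpD2[OF fpD(1)[OF disconn(4)]] disconn.prems by blast
  then show ?case using disconn(5) by simp
qed

lemma constr_empty: "construction {} J \<Longrightarrow> J = {}"
  using constr_empty_aux by blast

lemma constr_decomp:
  assumes "construction G K" "finest_partition G P"
  shows "\<exists>Kf. (\<forall>B\<in>P. construction B (Kf B)) \<and> K = (\<Union>B\<in>P. Kf B)"
  using assms(1)
proof (cases rule: construction.cases)
  case empty
  then have "P = {}" using hpD1[OF fpD(1)[OF assms(2)]] hpD2[OF fpD(1)[OF assms(2)]] by blast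
  then show ?thesis using empty by auto
next
  case (conn x K')
  have hG: "hypergraph G" and cG: "hconnected G" and cd: "card (\<Union>G) \<ge> 1" using conn by blast+
  then have "G \<noteq> {}" by (metis Union_empty card.empty not_one_le_zero)
  have hpP: "hyp_partition G P" using fpD(1)[OF assms(2)] .
  have "P = {G}" using conn_unique[OF cG hpP single_part[OF hG \<open>G \<noteq> {}\<close>]] .
  then show ?thesis using assms(1) by auto
next
  case (disconn P' Kf)
  have hG: "hypergraph G" and fP': "finest_partition G P'" using disconn by blast+
  have "P = P'" using fp_unique[OF hG assms(2) fP'] .
  then show ?thesis using disconn by blast
qed

lemma satD: "saturated G \<Longrightarrow> X1 \<in> G \<Longrightarrow> X2 \<in> G \<Longrightarrow> X1 \<inter> X2 \<noteq> {} \<Longrightarrow> X1 \<union> X2 \<in> G"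
  unfolding saturated_def by blast

lemma union_closed:
  assumes "saturated G" "finite F" "F \<noteq> {}" "F \<subseteq> G" "\<forall>X\<in>F. x \<in> X"
  shows "\<Union>F \<in> G \<and> x \<in> \<Union>F"
  using assms(2,3,4,5)
proof (induction F rule: finite_ne_induct)
  case (singleton X) then show ?case by simp
next
  case (insert X F)
  have a: "X \<in> G" "x \<in> X" using insert.prems by simp_all
  have b: "F \<subseteq> G" "\<forall>X\<in>F. x \<in> X" using insert.prems by simp_all
  have c: "\<Union>F \<in> G" "x \<in> \<Union>F" using insert.IH[OF b] by simp_all
  have "X \<union> \<Union>F \<in> G" by (rule satD[OF assms(1) a(1) c(1)]) (use a c in blast)
  then show ?case using a by simp
qed

definition mx :: "'a set set \<Rightarrow> 'a \<Rightarrow> 'a set" where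
  "mx G x = \<Union>{X\<in>G. x \<in> X}"

lemma mx_in:
  assumes "hypergraph G" "saturated G" "x \<in> \<Union>G"
  shows "mx G x \<in> G" "x \<in> mx G x"
proof -
  have "finite G" using assms(1) unfolding hypergraph_def by blast
  then have fin: "finite {X\<in>G. x \<in> X}" by simp
  have ne: "{X\<in>G. x \<in> X} \<noteq> {}" using assms(3) by blast
  have sub: "{X\<in>G. x \<in> X} \<subseteq> G" by blast
  have al: "\<forall>X\<in>{X\<in>G. x \<in> X}. x \<in> X" by blast
  show "mx G x \<in> G" "x \<in> mx G x" using union_closed[OF assms(2) fin ne sub al] unfolding mx_def by simp_all
qed

lemma mx_ge: "X \<in> G \<Longrightarrow> x \<in> X \<Longrightarrow> X \<subseteq> mx G x"
  unfolding mx_def by blast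

lemma mx_sub: "mx G x \<subseteq> \<Union>G" unfolding mx_def by blast

lemma mx_meet:
  assumes "hypergraph G" "saturated G" "x \<in> \<Union>G" "X \<in> G" "X \<inter> mx G x \<noteq> {}"
  shows "X \<subseteq> mx G x"
proof -
  note m = mx_in[OF assms(1-3)]
  have "X \<union> mx G x \<in> G" by (rule satD[OF assms(2) assms(4) m(1) assms(5)])
  moreover have "x \<in> X \<union> mx G x" using m(2) by simp
  ultimately have "X \<union> mx G x \<subseteq> mx G x" by (rule mx_ge)
  then show ?thesis by simp
qed

lemma mx_eq:
  assumes "hypergraph G" "saturated G" "x \<in> \<Union>G" "y \<in> mx G x"
  shows "mx G y = mx G x"
proof -
  have y: "y \<in> \<Union>G" using subsetD[OF mx_sub assms(4)] .
  note my = mx_in[OF assms(1,2) y]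
  have "mx G y \<inter> mx G x \<noteq> {}" using my(2) assms(4) by blast
  then have "mx G y \<subseteq> mx G x" by (rule mx_meet[OF assms(1-3) my(1)])
  moreover have "mx G x \<subseteq> mx G y" using mx_ge[OF mx_in(1)[OF assms(1-3)] assms(4)] .
  ultimately show ?thesis by (rule antisym)
qed

lemma mx_disj:
  assumes "hypergraph G" "saturated G" "x \<in> \<Union>G" "y \<in> \<Union>G" "mx G x \<inter> mx G y \<noteq> {}"
  shows "mx G x = mx G y"
proof -
  obtain z where "z \<in> mx G x" "z \<in> mx G y" using assms(5) by blast
  then have "mx G z = mx G x" "mx G z = mx G y" using mx_eq[OF assms(1-3)] mx_eq[OF assms(1,2,4)] by blast+
  then show ?thesis by simp
qed

lemma restr_mem: "X \<in> restr G A \<longleftrightarrow> X \<in> G \<and> X \<subseteq> A"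
  unfolding restr_def by simp

lemma restrI: "X \<in> G \<Longrightarrow> X \<subseteq> A \<Longrightarrow> X \<in> restr G A"
  unfolding restr_def by simp
lemma restrD: "X \<in> restr G A \<Longrightarrow> X \<in> G" "X \<in> restr G A \<Longrightarrow> X \<subseteq> A"
  unfolding restr_def by simp_all

lemma restr_carrier: assumes "A \<in> G" shows "\<Union>(restr G A) = A"
proof
  show "\<Union>(restr G A) \<subseteq> A" using restrD(2) by (rule Union_least)
  have "A \<in> restr G A" using assms by (rule restrI) simp
  then show "A \<subseteq> \<Union>(restr G A)" by (rule Union_upper)
qed

lemma restr_hyp: "hypergraph G \<Longrightarrow> hypergraph (restr G A)"
  unfolding hypergraph_def restr_def by simp

lemma restr_atomic: assumes "atomic G" shows "atomic (restr G A)"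
  unfolding atomic_def
proof
  fix x assume "x \<in> \<Union>(restr G A)"
  then obtain X where X: "X \<in> restr G A" "x \<in> X" by blast
  have "X \<in> G" "X \<subseteq> A" "x \<in> X" using restrD(1)[OF X(1)] restrD(2)[OF X(1)] X(2) by auto
  then have "{x} \<in> G" "{x} \<subseteq> A" using assms unfolding atomic_def by blast+
  then show "{x} \<in> restr G A" by (rule restrI)
qed

lemma restr_sat: "saturated G \<Longrightarrow> saturated (restr G A)"
  unfolding saturated_def restr_def by blast

lemma traceI: "X \<in> G \<Longrightarrow> X \<inter> Z \<noteq> {} \<Longrightarrow> X \<inter> Z \<in> trace Z G"
  unfolding trace_def by blast
lemma traceE: assumes "W \<in> trace Z G" obtains X where "X \<in> G" "W = X \<inter> Z" "X \<inter> Z \<noteq> {}"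
  using assms unfolding trace_def by blast

lemma trace_img: "trace Z G = (\<lambda>X. X \<inter> Z) ` {X\<in>G. X \<inter> Z \<noteq> {}}"
  unfolding trace_def by blast

lemma trace_hyp: assumes "hypergraph G" shows "hypergraph (trace Z G)"
proof -
  have "finite G" using assms unfolding hypergraph_def by blast
  then have "finite (trace Z G)" unfolding trace_img by simp
  moreover have "\<forall>W\<in>trace Z G. W \<noteq> {} \<and> finite W"
  proof
    fix W assume "W \<in> trace Z G"
    then obtain X where "X \<in> G" "W = X \<inter> Z" "X \<inter> Z \<noteq> {}" by (rule traceE)
    moreover have "finite X" using \<open>X \<in> G\<close> assms unfolding hypergraph_def by blast
    ultimately show "W \<noteq> {} \<and> finite W" by simp
  qed
  ultimately show ?thesis unfolding hypergraph_def by blast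
qed

lemma trace_sat: assumes "saturated G" shows "saturated (trace Z G)"
  unfolding saturated_def
proof (intro ballI impI)
  fix X1 X2 assume t: "X1 \<in> trace Z G" "X2 \<in> trace Z G" and i: "X1 \<inter> X2 \<noteq> {}"
  obtain A1 where A1: "A1 \<in> G" "X1 = A1 \<inter> Z" using t(1) by (rule traceE)
  obtain A2 where A2: "A2 \<in> G" "X2 = A2 \<inter> Z" using t(2) by (rule traceE)
  note A = A1(1) A2(1) A1(2) A2(2)
  then have "A1 \<inter> A2 \<noteq> {}" using i by blast
  then have "A1 \<union> A2 \<in> G" by (rule satD[OF assms A(1,2)])
  moreover have "(A1 \<union> A2) \<inter> Z = X1 \<union> X2" using A by blast
  moreover have "X1 \<union> X2 \<noteq> {}" using i by blast
  ultimately show "X1 \<union> X2 \<in> trace Z G" using traceI[of "A1 \<union> A2" G Z] by simp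
qed

lemma comps_fp:
  assumes "hypergraph G" "saturated G"
  shows "finest_partition G ((\<lambda>z. restr G (mx G z)) ` \<Union>G)"
proof -
  let ?P = "(\<lambda>z. restr G (mx G z)) ` \<Union>G"
  have car: "\<Union>(restr G (mx G z)) = mx G z" if "z \<in> \<Union>G" for z
    using restr_carrier[OF mx_in(1)[OF assms that]] .
  have mxr: "mx G z \<in> restr G (mx G z)" if "z \<in> \<Union>G" for z
    by (rule restrI[OF mx_in(1)[OF assms that] subset_refl])
  have "hyp_partition G ?P"
  proof (rule hp_intro[OF assms(1)])
    show "\<forall>B\<in>?P. B \<noteq> {}"
    proof
      fix B assume "B \<in> ?P"
      then obtain z where z: "z \<in> \<Union>G" "B = restr G (mx G z)" by (rule imageE) (rule that, simp_all)
      show "B \<noteq> {}" using mxr[OF z(1)] z(2) by auto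
    qed
    have "G \<subseteq> \<Union>?P"
    proof
      fix X assume X: "X \<in> G"
      then obtain x where x: "x \<in> X" using hyp_ne[OF assms(1)] by blast
      have a: "X \<in> restr G (mx G x)" by (rule restrI[OF X mx_ge[OF X x]])
      have "x \<in> \<Union>G" by (rule UnionI[OF X x])
      then have "restr G (mx G x) \<in> ?P" by (rule imageI)
      then show "X \<in> \<Union>?P" using a by (rule UnionI)
    qed
    moreover have "\<Union>?P \<subseteq> G"
    proof
      fix X assume "X \<in> \<Union>?P"
      then obtain B where B: "B \<in> ?P" "X \<in> B" by (rule UnionE)
      from B(1) obtain z where "B = restr G (mx G z)" by (rule imageE) simp
      then show "X \<in> G" using B(2) restrD(1) by simp
    qed
    ultimately show "\<Union>?P = G" by (rule antisym[rotated])
    show "\<forall>B1\<in>?P. \<forall>B2\<in>?P. B1 \<noteq> B2 \<longrightarrow> \<Union>B1 \<inter> \<Union>B2 = {}"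
    proof (intro ballI impI)
      fix B1 B2 assume b: "B1 \<in> ?P" "B2 \<in> ?P" "B1 \<noteq> B2"
      obtain z1 where z1: "z1 \<in> \<Union>G" "B1 = restr G (mx G z1)" using b(1) by (rule imageE) (rule that, simp_all)
      obtain z2 where z2: "z2 \<in> \<Union>G" "B2 = restr G (mx G z2)" using b(2) by (rule imageE) (rule that, simp_all)
      have "mx G z1 \<noteq> mx G z2" using b(3) z1(2) z2(2) by metis
      then have "mx G z1 \<inter> mx G z2 = {}" using mx_disj[OF assms z1(1) z2(1)] by blast
      then show "\<Union>B1 \<inter> \<Union>B2 = {}" using car[OF z1(1)] car[OF z2(1)] z1(2) z2(2) by simp
    qed
  qed
  moreover have "\<forall>B\<in>?P. hconnected B"
  proof
    fix B assume "B \<in> ?P"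
    then obtain z where z: "z \<in> \<Union>G" "B = restr G (mx G z)" by (rule imageE) (rule that, simp_all)
    have "\<Union>B \<in> B" using mxr[OF z(1)] car[OF z(1)] z(2) by simp
    then show "hconnected B" using full_conn[OF restr_hyp[OF assms(1)]] z(2) by simp
  qed
  ultimately show ?thesis unfolding finest_partition_def by (rule conjI)
qed

lemma hunion_restr: "X \<union> Y \<subseteq> S \<Longrightarrow> hunion (restr H S) X Y = hunion H X Y"
  unfolding hunion_def restr_def by auto

lemma restr_restr: "Y \<subseteq> M \<Longrightarrow> restr (restr H M) Y = restr H Y"
  unfolding restr_def by blast

lemma restr_all: "restr H (\<Union>H) = H"
  unfolding restr_def by blast

lemma trace_empty: "trace {} H = {}"
  unfolding trace_def by simp

lemma hyp_fin: "hypergraph H \<Longrightarrow> finite (\<Union>H)"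
  unfolding hypergraph_def by blast

lemma hunion_img: "{hunion H X Y | X. X \<in> J} = (\<lambda>X. hunion H X Y) ` J"
  by blast

lemma main:
  "card (\<Union>H) = n \<Longrightarrow> hypergraph H \<Longrightarrow> atomic H \<Longrightarrow> saturated H \<Longrightarrow> Y \<in> H
   \<Longrightarrow> construction (restr H Y) K \<Longrightarrow> construction (trace (\<Union>H - Y) H) J
   \<Longrightarrow> construction H (K \<union> (\<lambda>X. hunion H X Y) ` J)"
proof (induction n arbitrary: H Y K J rule: less_induct)
  case (less n)
  note hH = less.prems(2) and aH = less.prems(3) and sH = less.prems(4) and YH = less.prems(5)
    and cK = less.prems(6) and cJ = less.prems(7)
  define U where "U = \<Union>H"
  have finU: "finite U" unfolding U_def by (rule hyp_fin[OF hH])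
  have Yne: "Y \<noteq> {}" by (rule hyp_ne[OF hH YH])
  have XU: "\<And>X. X \<in> H \<Longrightarrow> X \<subseteq> U" unfolding U_def by (rule Union_upper)
  have YU: "Y \<subseteq> U" by (rule XU[OF YH])
  define f where "f = (\<lambda>X. hunion H X Y)"
  show ?case
  proof (cases "U \<in> H")
    case True
    have connH: "hconnected H" using full_conn[OF hH] True unfolding U_def by simp
    show ?thesis
    proof (cases "U - Y = {}")
      case True
      then have "\<Union>H - Y = {}" unfolding U_def .
      then have "trace (\<Union>H - Y) H = {}" using trace_empty by (simp only:)
      then have "J = {}" using cJ constr_empty by simp
      have "Y = U" using True YU by blast
      then have "restr H Y = H" using restr_all unfolding U_def by simp
      then show ?thesis using cK \<open>J = {}\<close> by simp
    next
      case False
      define Z where "Z = U - Y"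
      define T where "T = trace Z H"
      have cJ': "construction T J" using cJ unfolding T_def Z_def U_def .
      have ZT: "Z \<in> T" using traceI[OF True, of Z] False unfolding T_def Z_def by (simp add: Int_absorb1)
      have TZ: "\<And>W. W \<in> T \<Longrightarrow> W \<subseteq> Z" unfolding T_def by (erule traceE) simp
      have UT: "\<Union>T = Z" using ZT TZ by blast
      have hT: "hypergraph T" unfolding T_def by (rule trace_hyp[OF hH])
      have cT: "hconnected T" using full_conn[OF hT] UT ZT by simp
      obtain x J' where J: "J = J' \<union> {Z}" "x \<in> Z" "construction (restr T (Z - {x})) J'"
        using cJ'
      proof (cases rule: construction.cases)
        case empty then show ?thesis using ZT by simp
      next
        case (conn x K') then show ?thesis using that UT by simp
      next
        case (disconn P Kf) then show ?thesis using cT by simp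
      qed
      have xU: "x \<in> U" "x \<notin> Y" using J(2) unfolding Z_def by simp_all
      define H' where "H' = restr H (U - {x})"
      have UH': "\<Union>H' = U - {x}"
      proof
        show "\<Union>H' \<subseteq> U - {x}" unfolding H'_def using restrD(2) by (rule Union_least)
        show "U - {x} \<subseteq> \<Union>H'"
        proof
          fix y assume y: "y \<in> U - {x}"
          then have "{y} \<in> H" using aH unfolding atomic_def U_def by blast
          then have "{y} \<in> H'" unfolding H'_def by (rule restrI) (use y in simp)
          then show "y \<in> \<Union>H'" by blast
        qed
      qed
      have hH': "hypergraph H'" unfolding H'_def by (rule restr_hyp[OF hH])
      have aH': "atomic H'" unfolding H'_def by (rule restr_atomic[OF aH])
      have sH': "saturated H'" unfolding H'_def by (rule restr_sat[OF sH])
      have YsU: "Y \<subseteq> U - {x}" using YU xU by blast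
      have YH': "Y \<in> H'" unfolding H'_def by (rule restrI[OF YH YsU])
      have "\<Union>H' \<subset> U" using UH' xU by blast
      then have card': "card (\<Union>H') < n" using psubset_card_mono[OF finU] less.prems(1) unfolding U_def by simp
      have rY: "restr H' Y = restr H Y" unfolding H'_def by (rule restr_restr[OF YsU])
      have tr: "trace (\<Union>H' - Y) H' = restr T (Z - {x})"
      proof
        show "trace (\<Union>H' - Y) H' \<subseteq> restr T (Z - {x})"
        proof
          fix W assume "W \<in> trace (\<Union>H' - Y) H'"
          then obtain X where X: "X \<in> H'" "W = X \<inter> (\<Union>H' - Y)" "X \<inter> (\<Union>H' - Y) \<noteq> {}" by (rule traceE)
          have X1: "X \<in> H" "X \<subseteq> U - {x}" using X(1) restrD unfolding H'_def by blast+
          have "X \<inter> Z = W" using X(2) X1(2) UH' unfolding Z_def by blast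
          then have "W \<in> T" using traceI[OF X1(1), of Z] X(2,3) unfolding T_def by simp
          moreover have "W \<subseteq> Z - {x}" using X(2) UH' unfolding Z_def by blast
          ultimately show "W \<in> restr T (Z - {x})" by (rule restrI)
        qed
        show "restr T (Z - {x}) \<subseteq> trace (\<Union>H' - Y) H'"
        proof
          fix W assume W: "W \<in> restr T (Z - {x})"
          then have W1: "W \<in> T" "W \<subseteq> Z - {x}" using restrD by blast+
          obtain X where X: "X \<in> H" "W = X \<inter> Z" "X \<inter> Z \<noteq> {}" using W1(1) unfolding T_def by (rule traceE)
          have "x \<notin> X" using X(2) W1(2) J(2) by blast
          then have "X \<subseteq> U - {x}" using XU[OF X(1)] by blast
          then have XH': "X \<in> H'" unfolding H'_def by (rule restrI[OF X(1)])
          have "X \<inter> (\<Union>H' - Y) = W" using X(2) \<open>X \<subseteq> U - {x}\<close> UH' unfolding Z_def by blast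
          then show "W \<in> trace (\<Union>H' - Y) H'" using traceI[OF XH', of "\<Union>H' - Y"] X(3) X(2) by simp
        qed
      qed
      have IH: "construction H' (K \<union> (\<lambda>X. hunion H' X Y) ` J')"
        using less.IH[OF card' refl hH' aH' sH' YH'] cK J(3) rY tr by simp
      have eq: "(\<lambda>X. hunion H' X Y) ` J' = f ` J'"
      proof (rule image_cong[OF refl])
        fix X assume "X \<in> J'"
        then have "X \<subseteq> \<Union>(restr T (Z - {x}))" using constr_props[OF J(3)] by blast
        moreover have "\<Union>(restr T (Z - {x})) \<subseteq> Z - {x}" using restrD(2) by (rule Union_least)
        ultimately have "X \<union> Y \<subseteq> U - {x}" using YsU unfolding Z_def by blast
        then show "hunion H' X Y = f X" unfolding H'_def f_def by (rule hunion_restr)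
      qed
      have c1: "card (\<Union>H) \<ge> 1" using Yne YH XU finU less.prems(1) unfolding U_def
        by (metis One_nat_def Suc_leI YU bot.extremum_uniqueI card_gt_0_iff)
      have "construction H ((K \<union> f ` J') \<union> {\<Union>H})"
        using construction.conn[OF hH aH c1 connH, of x "K \<union> f ` J'"] IH eq xU(1)
        unfolding H'_def U_def by simp
      moreover have "f Z = \<Union>H"
      proof -
        have "Z \<union> Y = U" unfolding Z_def using YU by blast
        then show ?thesis unfolding f_def hunion_def using True U_def by simp
      qed
      ultimately show ?thesis using J(1) by (simp add: Un_assoc f_def)
    qed
  next
    case False
    obtain y0 where y0: "y0 \<in> Y" using Yne by blast
    have y0U: "y0 \<in> \<Union>H" using YU y0 unfolding U_def by blast
    define M1 where "M1 = mx H y0"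
    have M1H: "M1 \<in> H" and y0M1: "y0 \<in> M1" unfolding M1_def using mx_in[OF hH sH y0U] by simp_all
    have YM1: "Y \<subseteq> M1" unfolding M1_def by (rule mx_ge[OF YH y0])
    have M1U: "M1 \<subseteq> U" by (rule XU[OF M1H])
    define cp where "cp = (\<lambda>z. restr H (mx H z))"
    define P where "P = cp ` \<Union>H"
    define C1 where "C1 = restr H M1"
    have C1cp: "cp y0 = C1" unfolding cp_def C1_def M1_def ..
    have fP: "finest_partition H P" unfolding P_def cp_def by (rule comps_fp[OF hH sH])
    have mxeqM1: "mx H w = M1" if "w \<in> M1" for w
      unfolding M1_def by (rule mx_eq[OF hH sH y0U that[unfolded M1_def]])
    have disjM1: "mx H w \<inter> M1 = {}" if "w \<in> \<Union>H" "w \<notin> M1" for w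
    proof (rule ccontr)
      assume "mx H w \<inter> M1 \<noteq> {}"
      then have "mx H w = M1" unfolding M1_def by (rule mx_disj[OF hH sH that(1) y0U])
      then show False using mx_in(2)[OF hH sH that(1)] that(2) by simp
    qed
    have mxU: "mx H w \<subseteq> U" for w unfolding U_def by (rule mx_sub)
    have carcp: "\<Union>(cp w) = mx H w" if "w \<in> \<Union>H" for w
      unfolding cp_def by (rule restr_carrier[OF mx_in(1)[OF hH sH that]])
    have mxcp: "mx H w \<in> cp w" if "w \<in> \<Union>H" for w
      unfolding cp_def by (rule restrI[OF mx_in(1)[OF hH sH that] subset_refl])
    obtain z where z: "z \<in> \<Union>H" "z \<notin> M1"
    proof -
      have "\<not> U \<subseteq> M1" using False M1H M1U by (metis subset_antisym)
      then show ?thesis using that unfolding U_def by blast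
    qed
    have "cp z \<noteq> C1"
    proof
      assume "cp z = C1"
      then have "mx H z \<in> C1" using mxcp[OF z(1)] by simp
      then have "mx H z \<subseteq> M1" unfolding C1_def by (rule restrD(2))
      then show False using mx_in(2)[OF hH sH z(1)] z(2) by blast
    qed
    have finP: "finite P" unfolding P_def using hyp_fin[OF hH] by simp
    have "{cp z, C1} \<subseteq> P" unfolding P_def using z(1) y0U C1cp by blast
    moreover have "card {cp z, C1} = 2" using \<open>cp z \<noteq> C1\<close> by simp
    ultimately have card2: "card P \<ge> 2" using card_mono[OF finP] by metis
    have ncH: "\<not> hconnected H" by (rule not_conn[OF hH fpD(1)[OF fP] card2])
    define Z where "Z = U - Y"
    define T where "T = trace Z H"
    define tr1 where "tr1 = trace (M1 - Y) C1"
    define PT where "PT = cp ` (\<Union>H - M1) \<union> (if M1 = Y then {} else {tr1})"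
    have hT: "hypergraph T" unfolding T_def by (rule trace_hyp[OF hH])
    have hC1: "hypergraph C1" unfolding C1_def by (rule restr_hyp[OF hH])
    have htr1: "hypergraph tr1" unfolding tr1_def by (rule trace_hyp[OF hC1])
    have UC1: "\<Union>C1 = M1" unfolding C1_def by (rule restr_carrier[OF M1H])
    have tr1sub: "\<And>W. W \<in> tr1 \<Longrightarrow> W \<subseteq> M1 - Y" unfolding tr1_def by (erule traceE) simp
    have M1tr1: "M1 - Y \<in> tr1" if "M1 \<noteq> Y"
    proof -
      have "M1 \<in> C1" unfolding C1_def by (rule restrI[OF M1H subset_refl])
      moreover have "M1 \<inter> (M1 - Y) = M1 - Y" by blast
      moreover have "M1 - Y \<noteq> {}" using that YM1 by blast
      ultimately show ?thesis unfolding tr1_def using traceI[of M1 C1 "M1 - Y"] by simp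
    qed
    have Utr1: "\<Union>tr1 = M1 - Y" if "M1 \<noteq> Y" using M1tr1[OF that] tr1sub by blast
    have mxZ: "mx H w \<subseteq> Z" if "w \<in> \<Union>H" "w \<notin> M1" for w
      using disjM1[OF that] mxU[of w] YM1 unfolding Z_def by blast
    have F1: "cp w \<subseteq> T" if "w \<in> \<Union>H" "w \<notin> M1" for w
    proof
      fix X assume "X \<in> cp w"
      then have X: "X \<in> H" "X \<subseteq> mx H w" unfolding cp_def using restrD by blast+
      have "X \<inter> Z = X" using X(2) mxZ[OF that] by blast
      moreover have "X \<noteq> {}" by (rule hyp_ne[OF hH X(1)])
      ultimately show "X \<in> T" unfolding T_def using traceI[OF X(1), of Z] by simp
    qed
    have F2: "tr1 \<subseteq> T"
    proof
      fix W assume "W \<in> tr1"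
      then obtain X where X: "X \<in> C1" "W = X \<inter> (M1 - Y)" "X \<inter> (M1 - Y) \<noteq> {}" unfolding tr1_def by (rule traceE)
      have X1: "X \<in> H" "X \<subseteq> M1" using X(1) restrD unfolding C1_def by blast+
      have "X \<inter> Z = W" using X(2) X1(2) M1U unfolding Z_def by blast
      then show "W \<in> T" unfolding T_def using traceI[OF X1(1), of Z] X(2,3) by simp
    qed
    have F3: "T \<subseteq> \<Union>PT"
    proof
      fix W assume "W \<in> T"
      then obtain X where X: "X \<in> H" "W = X \<inter> Z" "X \<inter> Z \<noteq> {}" unfolding T_def by (rule traceE)
      obtain x where x: "x \<in> X" using hyp_ne[OF hH X(1)] by blast
      have xU: "x \<in> \<Union>H" using X(1) x by blast
      have Xmx: "X \<subseteq> mx H x" by (rule mx_ge[OF X(1) x])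
      show "W \<in> \<Union>PT"
      proof (cases "x \<in> M1")
        case True
        then have "X \<subseteq> M1" using Xmx mxeqM1 by simp
        then have XC1: "X \<in> C1" unfolding C1_def by (rule restrI[OF X(1)])
        have eq: "X \<inter> (M1 - Y) = W" using X(2) \<open>X \<subseteq> M1\<close> M1U unfolding Z_def by blast
        then have "M1 \<noteq> Y" using X(2,3) by blast
        then have "tr1 \<in> PT" unfolding PT_def by simp
        moreover have "W \<in> tr1" unfolding tr1_def using traceI[OF XC1, of "M1 - Y"] eq X(2,3) by simp
        ultimately show ?thesis by blast
      next
        case False
        have "X \<subseteq> Z" using Xmx mxZ[OF xU False] by blast
        then have "W = X" using X(2) by blast
        moreover have "X \<in> cp x" unfolding cp_def by (rule restrI[OF X(1) Xmx])
        moreover have "cp x \<in> PT" unfolding PT_def using xU False by blast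
        ultimately show ?thesis by blast
      qed
    qed
    have cpPT: "\<And>B. B \<in> cp ` (\<Union>H - M1) \<Longrightarrow> \<exists>w. w \<in> \<Union>H \<and> w \<notin> M1 \<and> B = cp w" by blast
    have PTcases: "\<And>B. B \<in> PT \<Longrightarrow> (\<exists>w. w \<in> \<Union>H \<and> w \<notin> M1 \<and> B = cp w) \<or> (M1 \<noteq> Y \<and> B = tr1)"
      unfolding PT_def by (auto split: if_splits)
    have hpT: "hyp_partition T PT"
    proof (rule hp_intro[OF hT])
      show "\<forall>B\<in>PT. B \<noteq> {}"
      proof
        fix B assume "B \<in> PT"
        then show "B \<noteq> {}" using PTcases[of B] mxcp M1tr1 by blast
      qed
      have "\<Union>PT \<subseteq> T"
      proof
        fix X assume "X \<in> \<Union>PT"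
        then obtain B where B: "B \<in> PT" "X \<in> B" by blast
        then show "X \<in> T" using PTcases[OF B(1)] F1 F2 by blast
      qed
      then show "\<Union>PT = T" using F3 by (rule antisym)
      show "\<forall>B1\<in>PT. \<forall>B2\<in>PT. B1 \<noteq> B2 \<longrightarrow> \<Union>B1 \<inter> \<Union>B2 = {}"
      proof (intro ballI impI)
        fix B1 B2 assume b: "B1 \<in> PT" "B2 \<in> PT" "B1 \<noteq> B2"
        have cross: "\<Union>(cp w) \<inter> \<Union>tr1 = {}" if "w \<in> \<Union>H" "w \<notin> M1" "M1 \<noteq> Y" for w
          using carcp[OF that(1)] Utr1[OF that(3)] disjM1[OF that(1,2)] by blast
        show "\<Union>B1 \<inter> \<Union>B2 = {}"
        proof (cases "\<exists>w. w \<in> \<Union>H \<and> w \<notin> M1 \<and> B1 = cp w")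
          case True
          then obtain w1 where w1: "w1 \<in> \<Union>H" "w1 \<notin> M1" "B1 = cp w1" by blast
          show ?thesis
          proof (cases "\<exists>w. w \<in> \<Union>H \<and> w \<notin> M1 \<and> B2 = cp w")
            case True
            then obtain w2 where w2: "w2 \<in> \<Union>H" "w2 \<notin> M1" "B2 = cp w2" by blast
            have "mx H w1 \<noteq> mx H w2" using b(3) w1(3) w2(3) unfolding cp_def by metis
            then have "mx H w1 \<inter> mx H w2 = {}" using mx_disj[OF hH sH w1(1) w2(1)] by blast
            then show ?thesis using carcp[OF w1(1)] carcp[OF w2(1)] w1(3) w2(3) by simp
          next
            case False
            then have "M1 \<noteq> Y" "B2 = tr1" using PTcases[OF b(2)] by blast+
            then show ?thesis using cross[OF w1(1,2)] w1(3) by simp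
          qed
        next
          case False
          then have B1: "M1 \<noteq> Y" "B1 = tr1" using PTcases[OF b(1)] by blast+
          then have "\<exists>w. w \<in> \<Union>H \<and> w \<notin> M1 \<and> B2 = cp w" using PTcases[OF b(2)] b(3) by blast
          then obtain w2 where w2: "w2 \<in> \<Union>H" "w2 \<notin> M1" "B2 = cp w2" by blast
          then show ?thesis using cross[OF w2(1,2) B1(1)] B1(2) by blast
        qed
      qed
    qed
    have cPT: "\<forall>B\<in>PT. hconnected B"
    proof
      fix B assume BPT: "B \<in> PT"
      show "hconnected B"
      proof (cases "\<exists>w. w \<in> \<Union>H \<and> w \<notin> M1 \<and> B = cp w")
        case True
        then obtain w where w: "w \<in> \<Union>H" "w \<notin> M1" "B = cp w" by blast
        have "\<Union>B \<in> B" using mxcp[OF w(1)] carcp[OF w(1)] w(3) by simp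
        moreover have "hypergraph B" unfolding w(3) cp_def by (rule restr_hyp[OF hH])
        ultimately show ?thesis using full_conn by blast
      next
        case False
        then have "M1 \<noteq> Y" "B = tr1" using PTcases[OF BPT] by blast+
        then show ?thesis using full_conn[OF htr1] Utr1 M1tr1 by simp
      qed
    qed
    have fPT: "finest_partition T PT" unfolding finest_partition_def using hpT cPT by blast
    have cJT: "construction T J" using cJ unfolding T_def Z_def U_def .
    obtain Jf where Jf: "\<forall>B\<in>PT. construction B (Jf B)" "J = (\<Union>B\<in>PT. Jf B)"
      using constr_decomp[OF cJT fPT] by blast
    define J1 where "J1 = (if M1 = Y then {} else Jf tr1)"
    have cJ1: "construction tr1 J1"
    proof (cases "M1 = Y")
      case True
      then have "tr1 = {}" unfolding tr1_def using trace_empty by simp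
      then show ?thesis unfolding J1_def using True construction.empty by simp
    next
      case False
      then have "tr1 \<in> PT" unfolding PT_def by simp
      then show ?thesis unfolding J1_def using False Jf(1) by simp
    qed
    have J1J: "J1 \<subseteq> J"
    proof (cases "M1 = Y")
      case True then show ?thesis unfolding J1_def by simp
    next
      case False
      then have "tr1 \<in> PT" unfolding PT_def by simp
      then show ?thesis unfolding J1_def Jf(2) using False by auto
    qed
    have aC1: "atomic C1" unfolding C1_def by (rule restr_atomic[OF aH])
    have sC1: "saturated C1" unfolding C1_def by (rule restr_sat[OF sH])
    have YC1: "Y \<in> C1" unfolding C1_def by (rule restrI[OF YH YM1])
    have "M1 \<subset> U" using M1U z unfolding U_def by blast
    then have cardC1: "card (\<Union>C1) < n" using psubset_card_mono[OF finU] less.prems(1) UC1 unfolding U_def by simp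
    have rC1: "restr C1 Y = restr H Y" unfolding C1_def by (rule restr_restr[OF YM1])
    have IH1: "construction C1 (K \<union> (\<lambda>X. hunion C1 X Y) ` J1)"
      using less.IH[OF cardC1 refl hC1 aC1 sC1 YC1] cK rC1 cJ1 UC1 unfolding tr1_def by simp
    have eq1: "(\<lambda>X. hunion C1 X Y) ` J1 = f ` J1"
    proof (rule image_cong[OF refl])
      fix X assume "X \<in> J1"
      then have "X \<subseteq> \<Union>tr1" using constr_props[OF cJ1] by blast
      moreover have "\<Union>tr1 \<subseteq> M1 - Y" using tr1sub by blast
      ultimately have "X \<union> Y \<subseteq> M1" using YM1 by blast
      then show "hunion C1 X Y = f X" unfolding C1_def f_def by (rule hunion_restr)
    qed
    have fix1: "f X = X" if "w \<in> \<Union>H" "w \<notin> M1" "X \<in> Jf (cp w)" for w X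
    proof -
      have "cp w \<in> PT" unfolding PT_def using that(1,2) by blast
      then have "construction (cp w) (Jf (cp w))" using Jf(1) by blast
      then have X: "X \<noteq> {}" "X \<subseteq> mx H w" using constr_props that(3) carcp[OF that(1)] by blast+
      have "X \<union> Y \<notin> H"
      proof
        assume XY: "X \<union> Y \<in> H"
        have "(X \<union> Y) \<inter> mx H y0 \<noteq> {}" using y0 YM1 unfolding M1_def by blast
        then have "X \<union> Y \<subseteq> M1" unfolding M1_def by (rule mx_meet[OF hH sH y0U XY])
        then show False using X disjM1[OF that(1,2)] by blast
      qed
      then show ?thesis unfolding f_def hunion_def by simp
    qed
    define Kf where "Kf = (\<lambda>C. if C = C1 then K \<union> f ` J1 else Jf C)"
    have cKf: "\<forall>C\<in>P. construction C (Kf C)"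
    proof
      fix C assume "C \<in> P"
      then obtain w where w: "w \<in> \<Union>H" "C = cp w" unfolding P_def by blast
      show "construction C (Kf C)"
      proof (cases "C = C1")
        case True then show ?thesis unfolding Kf_def using IH1 eq1 by simp
      next
        case False
        have "w \<notin> M1"
        proof
          assume "w \<in> M1"
          then have "cp w = C1" unfolding cp_def C1_def using mxeqM1 by simp
          then show False using False w(2) by simp
        qed
        then have "C \<in> PT" unfolding PT_def using w by blast
        then show ?thesis unfolding Kf_def using False Jf(1) by simp
      qed
    qed
    have cH: "construction H (\<Union>C\<in>P. Kf C)"
      by (rule construction.disconn[OF hH aH ncH fP card2 cKf])
    have C1P: "C1 \<in> P" unfolding P_def using y0U C1cp by blast
    have "(\<Union>C\<in>P. Kf C) = K \<union> f ` J"
    proof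
      show "(\<Union>C\<in>P. Kf C) \<subseteq> K \<union> f ` J"
      proof
        fix W assume "W \<in> (\<Union>C\<in>P. Kf C)"
        then obtain C where C: "C \<in> P" "W \<in> Kf C" by blast
        then obtain w where w: "w \<in> \<Union>H" "C = cp w" unfolding P_def by blast
        show "W \<in> K \<union> f ` J"
        proof (cases "C = C1")
          case True
          then show ?thesis using C(2) J1J unfolding Kf_def by auto
        next
          case False
          have "w \<notin> M1"
          proof
            assume "w \<in> M1"
            then have "cp w = C1" unfolding cp_def C1_def using mxeqM1 by simp
            then show False using False w(2) by simp
          qed
          then have "cp w \<in> PT" unfolding PT_def using w by blast
          moreover have W: "W \<in> Jf (cp w)" using C(2) False w(2) unfolding Kf_def by simp
          ultimately have "W \<in> J" unfolding Jf(2) by blast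
          moreover have "f W = W" by (rule fix1[OF w(1) \<open>w \<notin> M1\<close> W])
          ultimately show ?thesis by (metis UnI2 imageI)
        qed
      qed
      show "K \<union> f ` J \<subseteq> (\<Union>C\<in>P. Kf C)"
      proof
        fix W assume W: "W \<in> K \<union> f ` J"
        show "W \<in> (\<Union>C\<in>P. Kf C)"
        proof (cases "W \<in> K")
          case True
          then have "W \<in> Kf C1" unfolding Kf_def by simp
          then show ?thesis using C1P by blast
        next
          case False
          then obtain X where X: "X \<in> J" "W = f X" using W by blast
          then obtain B where B: "B \<in> PT" "X \<in> Jf B" unfolding Jf(2) by blast
          show ?thesis
          proof (cases "\<exists>w. w \<in> \<Union>H \<and> w \<notin> M1 \<and> B = cp w")
            case True
            then obtain w where w: "w \<in> \<Union>H" "w \<notin> M1" "B = cp w" by blast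
            have "W = X" using fix1[OF w(1,2)] B(2) w(3) X(2) by simp
            have "cp w \<noteq> C1"
            proof
              assume "cp w = C1"
              then have "mx H w \<in> C1" using mxcp[OF w(1)] by simp
              then have "mx H w \<subseteq> M1" unfolding C1_def by (rule restrD(2))
              then show False using mx_in(2)[OF hH sH w(1)] w(2) by blast
            qed
            then have "W \<in> Kf (cp w)" unfolding Kf_def using \<open>W = X\<close> B(2) w(3) by simp
            moreover have "cp w \<in> P" unfolding P_def using w(1) by blast
            ultimately show ?thesis by blast
          next
            case False
            then have "M1 \<noteq> Y" "B = tr1" using PTcases[OF B(1)] by blast+
            then have "X \<in> J1" unfolding J1_def using B(2) by simp
            then have "W \<in> Kf C1" unfolding Kf_def using X(2) by simp
            then show ?thesis using C1P by blast
          qed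
        qed
      qed
    qed
    then show ?thesis using cH unfolding f_def by simp
  qed
qed

theorem proposition7p5:
  fixes H :: "'a set set" and Y Z :: "'a set" and K J :: "'a set set"
  assumes "ASC H"
    and "Y \<in> H"
    and "Z = \<Union>H - Y"
    and "construction (restr H Y) K"
    and "construction (trace Z H) J"
  shows "construction H (K \<union> {hunion H X Y | X. X \<in> J})"
proof -
  have hH: "hypergraph H" and aH: "atomic H" and sH: "saturated H"
    using assms(1) unfolding ASC_def by blast+
  have cJ: "construction (trace (\<Union>H - Y) H) J" using assms(5) assms(3) by simp
  show ?thesis unfolding hunion_img by (rule main[OF refl hH aH sH assms(2) assms(4) cJ])
qed

end
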